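(* Let $K$, $M=\begin{pmatrix}\alpha&\beta\\ \overline{\beta}&\gamma\end{pmatrix}$, $Q$, $\Delta$, $\varepsilon$ be as in the context, let $\lambda\in\mathbb{Q}_{>0}$ and let $\delta\in K$ with $|\delta|^2=\Delta$. Define $F:K^2\times K^2\to L^2$ by \[F\big((x,y)^T,(w,z)^T\big):=\big(\overline{z}+\overline{y}\sqrt{\varepsilon}\,j,\ -w+\overline{x}\sqrt{\varepsilon}\,j\big).\] Then $F$ restricts to a bijection between $\mathcal{B}_Q(\delta,\lambda)$ and $\mathcal{F}_{\alpha\lambda/\Delta}\!\left(\tfrac{\lambda}{\Delta}(\beta+\delta\sqrt{\varepsilon}\,j)\right)$.
   Context: $K$ is $\mathbb{Q}$ or an imaginary quadratic field, viewed inside $\mathbb{C}$, and $\mathbb{C}$ is identified with $\mathbb{R}+\mathbb{R}i$ inside the Hamilton quaternions $\mathbb{H}=\{a+bi+cj+dk\}$ (so $sj=j\overline{s}$ for $s\in K$). $M\in K^{2\times2}$ is positive definite hermitian, $Q(v)=v^*Mv$. A rational number is an absolute square in $K$ if it equals $|y|^2$ for some $y\in K$; write $\mu=\det M=\Delta\varepsilon$ with $\Delta\in\mathbb{Q}$ an absolute square in $K$ and $\varepsilon$ a positive integer whose only positive divisor that is an absolute square in $K$ is $1$. A pair $(a_1,a_2)\in K^2\times K^2$ is a $Q$-orthobalanced basis of norm $\lambda$ if $A^*MA=\lambda\,\mathrm{diag}(1,\varepsilon)$ for $A=(a_1|a_2)$; it is of type $\delta$ if $a_2=(Ma_1)_\perp/\delta$,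 where $(x,y)^T_\perp:=(-\overline{y},\overline{x})^T$. $\mathcal{B}_Q(\delta,\lambda)$ is the set of $Q$-orthobalanced bases of norm $\lambda$ and type $\delta$. $L:=\{r+s\sqrt{\varepsilon}\,j: r,s\in K\}\subseteq\mathbb{H}$, and for $t\in L$, $\nu\in\mathbb{Q}$: $\mathcal{F}_\nu(t):=\{(u,v)\in L^2: t=uv,\ |u|^2=\nu\}$, where $|\cdot|$ is the quaternion norm. *)

theory Defs
  imports Complex_Main
begin

definition Q_or_imag_quad :: "complex set \<Rightarrow> bool" where
  "Q_or_imag_quad K \<longleftrightarrow>
     K = {complex_of_real (of_rat a) | a. True} \<or>
     (\<exists>d::nat. d > 0 \<and>
        K = {complex_of_real (of_rat a) + complex_of_real (of_rat b) * (\<i> * complex_of_real (sqrt (real d)))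
             | a b. True})"

definition abs_square :: "complex set \<Rightarrow> real \<Rightarrow> bool" where
  "abs_square K q \<longleftrightarrow> (\<exists>y\<in>K. q = (cmod y)^2)"

text \<open>Vectors of K^2 are pairs (x,y); M = ((alpha, beta), (cnj beta, gamma)).
  herm_form alpha beta gamma u v = u^* M v.\<close>
definition herm_form :: "real \<Rightarrow> complex \<Rightarrow> real \<Rightarrow> complex \<times> complex \<Rightarrow> complex \<times> complex \<Rightarrow> complex" where
  "herm_form \<alpha> \<beta> \<gamma> u v =
     cnj (fst u) * (complex_of_real \<alpha> * fst v + \<beta> * snd v)
   + cnj (snd u) * (cnj \<beta> * fst v + complex_of_real \<gamma> * snd v)"

definition Qform :: "real \<Rightarrow> complex \<Rightarrow> real \<Rightarrow> complex \<times> complex \<Rightarrow> complex" where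
  "Qform \<alpha> \<beta> \<gamma> v = herm_form \<alpha> \<beta> \<gamma> v v"

definition Mvec :: "real \<Rightarrow> complex \<Rightarrow> real \<Rightarrow> complex \<times> complex \<Rightarrow> complex \<times> complex" where
  "Mvec \<alpha> \<beta> \<gamma> v = (complex_of_real \<alpha> * fst v + \<beta> * snd v, cnj \<beta> * fst v + complex_of_real \<gamma> * snd v)"

definition perp :: "complex \<times> complex \<Rightarrow> complex \<times> complex" where
  "perp v = (- cnj (snd v), cnj (fst v))"

definition pos_def :: "real \<Rightarrow> complex \<Rightarrow> real \<Rightarrow> bool" where
  "pos_def \<alpha> \<beta> \<gamma> \<longleftrightarrow> (\<forall>v. v \<noteq> (0,0) \<longrightarrow> Re (Qform \<alpha> \<beta> \<gamma> v) > 0)"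

definition detM :: "real \<Rightarrow> complex \<Rightarrow> real \<Rightarrow> real" where
  "detM \<alpha> \<beta> \<gamma> = \<alpha> * \<gamma> - (cmod \<beta>)^2"

definition orthobalanced ::
  "complex set \<Rightarrow> real \<Rightarrow> complex \<Rightarrow> real \<Rightarrow> nat \<Rightarrow> real \<Rightarrow> (complex \<times> complex) \<Rightarrow> (complex \<times> complex) \<Rightarrow> bool" where
  "orthobalanced K \<alpha> \<beta> \<gamma> \<epsilon> lam a1 a2 \<longleftrightarrow>
     fst a1 \<in> K \<and> snd a1 \<in> K \<and> fst a2 \<in> K \<and> snd a2 \<in> K \<and>
     herm_form \<alpha> \<beta> \<gamma> a1 a1 = complex_of_real lam \<and>
     herm_form \<alpha> \<beta> \<gamma> a1 a2 = 0 \<and>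
     herm_form \<alpha> \<beta> \<gamma> a2 a1 = 0 \<and>
     herm_form \<alpha> \<beta> \<gamma> a2 a2 = complex_of_real (lam * real \<epsilon>)"

definition BQ ::
  "complex set \<Rightarrow> real \<Rightarrow> complex \<Rightarrow> real \<Rightarrow> nat \<Rightarrow> complex \<Rightarrow> real \<Rightarrow> ((complex \<times> complex) \<times> (complex \<times> complex)) set" where
  "BQ K \<alpha> \<beta> \<gamma> \<epsilon> \<delta> lam =
     {(a1, a2). orthobalanced K \<alpha> \<beta> \<gamma> \<epsilon> lam a1 a2 \<and>
                a2 = (fst (perp (Mvec \<alpha> \<beta> \<gamma> a1)) / \<delta>, snd (perp (Mvec \<alpha> \<beta> \<gamma> a1)) / \<delta>)}"

text \<open>A Hamilton quaternion is encoded as a pair (p, q) of complex numbers standing for p + q j,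
  where C = R + R i inside H; since s j = j (cnj s), we get
  (a + b j)(c + d j) = (a c - b cnj d) + (a d + b cnj c) j.\<close>
type_synonym quat = "complex \<times> complex"

definition qmult :: "quat \<Rightarrow> quat \<Rightarrow> quat" where
  "qmult u v = (fst u * fst v - snd u * cnj (snd v), fst u * snd v + snd u * cnj (fst v))"

definition qnorm2 :: "quat \<Rightarrow> real" where
  "qnorm2 u = (cmod (fst u))^2 + (cmod (snd u))^2"

definition Lset :: "complex set \<Rightarrow> nat \<Rightarrow> quat set" where
  "Lset K \<epsilon> = {(r, s * complex_of_real (sqrt (real \<epsilon>))) | r s. r \<in> K \<and> s \<in> K}"

definition Fnu :: "complex set \<Rightarrow> nat \<Rightarrow> real \<Rightarrow> quat \<Rightarrow> (quat \<times> quat) set" where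
  "Fnu K \<epsilon> \<nu> t = {(u, v). u \<in> Lset K \<epsilon> \<and> v \<in> Lset K \<epsilon> \<and> t = qmult u v \<and> qnorm2 u = \<nu>}"

definition Fmap :: "nat \<Rightarrow> (complex \<times> complex) \<times> (complex \<times> complex) \<Rightarrow> quat \<times> quat" where
  "Fmap \<epsilon> p = (case p of ((x, y), (w, z)) \<Rightarrow>
     ((cnj z, cnj y * complex_of_real (sqrt (real \<epsilon>))),
      (- w, cnj x * complex_of_real (sqrt (real \<epsilon>)))))"

end

theory Submission
  imports Defs
begin

definition cfield :: "complex set \<Rightarrow> bool" where
  "cfield K \<longleftrightarrow> 0 \<in> K \<and> 1 \<in> K \<and> (\<forall>x\<in>K. \<forall>y\<in>K. x + y \<in> K \<and> x * y \<in> K) \<and>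
     (\<forall>x\<in>K. - x \<in> K \<and> inverse x \<in> K \<and> cnj x \<in> K)"

definition rq :: "nat \<Rightarrow> rat \<Rightarrow> rat \<Rightarrow> complex" where
  "rq d a b = complex_of_real (of_rat a) + complex_of_real (of_rat b) * (\<i> * complex_of_real (sqrt (real d)))"

lemma rq_Re: "Re (rq d a b) = of_rat a" by (simp add: rq_def)
lemma rq_Im: "Im (rq d a b) = of_rat b * sqrt (real d)" by (simp add: rq_def)

lemma rq_add: "rq d a b + rq d c e = rq d (a + c) (b + e)"
  by (simp add: complex_eq_iff rq_Re rq_Im of_rat_add algebra_simps)
lemma rq_mult: "rq d a b * rq d c e = rq d (a * c - of_nat d * b * e) (a * e + b * c)"
  by (simp add: complex_eq_iff rq_Re rq_Im of_rat_add of_rat_mult of_rat_diff algebra_simps)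
lemma rq_uminus: "- rq d a b = rq d (- a) (- b)"
  by (simp add: complex_eq_iff rq_Re rq_Im of_rat_minus)
lemma rq_cnj: "cnj (rq d a b) = rq d a (- b)"
  by (simp add: complex_eq_iff rq_Re rq_Im of_rat_minus)
lemma rq_inverse:
  assumes "d > 0"
  shows "inverse (rq d a b) = rq d (a / (a*a + of_nat d * b * b)) (- b / (a*a + of_nat d * b * b))"
proof (cases "a = 0 \<and> b = 0")
  case True then show ?thesis by (simp add: rq_def)
next
  case False
  have pos: "a*a + of_nat d * b * b > 0"
  proof -
    have "a*a \<ge> 0" "of_nat d * (b * b) \<ge> 0" by auto
    moreover have "a*a > 0 \<or> of_nat d * (b * b) > 0" using False assms
      by (metis mult_pos_pos not_square_less_zero of_nat_0_less_iff zero_less_mult_iff linorder_neqE_linordered_idom mult.assoc)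
    ultimately have "a*a + of_nat d * (b * b) > 0" by linarith
    then show ?thesis by (simp add: mult.assoc)
  qed
  have ne: "rq d a b \<noteq> 0" using False assms
    by (auto simp: complex_eq_iff rq_Re rq_Im)
  show ?thesis
  proof (rule inverse_unique)
    have "rq d a b * rq d (a / (a*a + of_nat d * b * b)) (- b / (a*a + of_nat d * b * b)) = rq d 1 0"
    proof -
      define N where "N = a*a + of_nat d * b * b"
      have N: "N \<noteq> 0" using pos N_def by simp
      have "a * (a / N) - of_nat d * b * (- b / N) = (a*a + of_nat d * b * b) / N"
        by (simp add: add_divide_distrib algebra_simps)
      then have e1: "a * (a / N) - of_nat d * b * (- b / N) = 1" using N unfolding N_def[symmetric] by simp
      have e2: "a * (- b / N) + b * (a / N) = 0" using N by (simp add: field_simps)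
      show ?thesis unfolding rq_mult N_def[symmetric] e1 e2 ..
    qed
    then show "rq d a b * rq d (a / (a*a + of_nat d * b * b)) (- b / (a*a + of_nat d * b * b)) = 1"
      by (simp add: rq_def)
  qed
qed

lemma Kfield: "Q_or_imag_quad K \<Longrightarrow> cfield K"
proof (unfold Q_or_imag_quad_def, elim disjE exE conjE)
  assume K: "K = {complex_of_real (of_rat a) | a. True}"
  show "cfield K" unfolding cfield_def K
    apply (intro conjI ballI)
    apply auto
    apply (metis of_rat_add of_real_add)
    apply (metis of_rat_mult of_real_mult)
    apply (metis of_rat_minus)
    apply (metis of_rat_inverse of_real_inverse)
    done
next
  fix d :: nat assume d: "d > 0"
    and K: "K = {complex_of_real (of_rat a) + complex_of_real (of_rat b) * (\<i> * complex_of_real (sqrt (real d))) | a b. True}"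
  have K': "K = {rq d a b | a b. True}" unfolding K rq_def by simp
  show "cfield K" unfolding cfield_def K'
    apply (intro conjI ballI)
    apply (auto simp: rq_add rq_mult rq_uminus rq_cnj rq_inverse[OF d])
    apply (rule exI[of _ 0], rule exI[of _ 0], simp add: rq_def)
    apply (rule exI[of _ 1], rule exI[of _ 0], simp add: rq_def)
    apply blast+
    done
qed

lemma core:
  fixes a g b B x X y Y d D Dl e l :: "'a::field"
  assumes h1: "D * d = Dl" and h2: "a * g - b * B = Dl * e"
    and nz: "d \<noteq> 0" "D \<noteq> 0"
  defines "z \<equiv> (a * X + B * Y) / d" and "Z \<equiv> (a * x + b * y) / D"
    and "w \<equiv> - (b * X + g * Y) / d" and "W \<equiv> - (B * x + g * y) / D"
    and "q \<equiv> X * (a * x + b * y) + Y * (B * x + g * y)"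
  shows "- Z * w - Y * x * e = q / Dl * b"
    and "Z * X - Y * W = q / Dl * d"
    and "Z * z + e * (Y * y) = a * q / Dl"
    and "X * (a * w + b * z) + Y * (B * w + g * z) = 0"
    and "W * (a * x + b * y) + Z * (B * x + g * y) = 0"
    and "W * (a * w + b * z) + Z * (B * w + g * z) = q * e"
proof -
  have Dl: "Dl \<noteq> 0" using h1 nz by auto
  note dd = Dl nz z_def Z_def w_def W_def q_def h1[symmetric]
  show "- Z * w - Y * x * e = q / Dl * b" using h2 unfolding dd
    by (simp add: field_simps nz; algebra)
  show "Z * X - Y * W = q / Dl * d" unfolding dd
    by (simp add: field_simps nz; algebra)
  show "Z * z + e * (Y * y) = a * q / Dl" using h2 unfolding dd
    by (simp add: field_simps nz; algebra)
  show "X * (a * w + b * z) + Y * (B * w + g * z) = 0" unfolding dd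
    by (simp add: field_simps nz; algebra)
  show "W * (a * x + b * y) + Z * (B * x + g * y) = 0" unfolding dd
    by (simp add: field_simps nz; algebra)
  show "W * (a * w + b * z) + Z * (B * w + g * z) = q * e" using h2 unfolding dd
    by (simp add: field_simps nz; algebra)
qed

lemma qcancel_id:
  "qmult (cnj (fst u), - snd u) (qmult u v) =
     (complex_of_real (qnorm2 u) * fst v, complex_of_real (qnorm2 u) * snd v)"
proof -
  obtain a b where u: "u = (a, b)" by fastforce
  obtain c e where v: "v = (c, e)" by fastforce
  have na: "(complex_of_real (cmod a))^2 = a * cnj a" and nb: "(complex_of_real (cmod b))^2 = b * cnj b"
    using complex_norm_square[of a] complex_norm_square[of b] by simp_all
  show ?thesis unfolding u v qmult_def qnorm2_def
    by (simp add: na nb algebra_simps)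
qed

lemma qcancel:
  assumes "qmult u v = qmult u v'" "qnorm2 u \<noteq> 0"
  shows "v = v'"
proof -
  have "(complex_of_real (qnorm2 u) * fst v, complex_of_real (qnorm2 u) * snd v) =
        (complex_of_real (qnorm2 u) * fst v', complex_of_real (qnorm2 u) * snd v')"
    by (metis qcancel_id assms(1))
  then have "fst v = fst v'" "snd v = snd v'" using assms(2) by simp_all
  then show ?thesis by (simp add: prod_eq_iff)
qed


theorem mainTheorem10:
  fixes K :: "complex set" and \<alpha> \<gamma> :: real and \<beta> :: complex
    and \<Delta> :: real and \<epsilon> :: nat and lam :: real and \<delta> :: complex
  assumes K: "Q_or_imag_quad K"
    and M_entries: "complex_of_real \<alpha> \<in> K" "\<beta> \<in> K" "complex_of_real \<gamma> \<in> K"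
    and M_posdef: "pos_def \<alpha> \<beta> \<gamma>"
    and Delta: "\<Delta> \<in> \<rat>" "abs_square K \<Delta>"
    and eps: "\<epsilon> > 0" "\<forall>n::nat. n > 0 \<and> n dvd \<epsilon> \<and> abs_square K (real n) \<longrightarrow> n = 1"
    and mu: "detM \<alpha> \<beta> \<gamma> = \<Delta> * real \<epsilon>"
    and lambda: "lam \<in> \<rat>" "lam > 0"
    and delta: "\<delta> \<in> K" "(cmod \<delta>)^2 = \<Delta>"
  shows "bij_betw (Fmap \<epsilon>) (BQ K \<alpha> \<beta> \<gamma> \<epsilon> \<delta> lam)
           (Fnu K \<epsilon> (\<alpha> * lam / \<Delta>)
              (complex_of_real (lam / \<Delta>) * \<beta>,
               complex_of_real (lam / \<Delta>) * \<delta> * complex_of_real (sqrt (real \<epsilon>))))"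
proof -
  have cf: "cfield K" using Kfield K .
  have Kadd: "\<And>x y. x \<in> K \<Longrightarrow> y \<in> K \<Longrightarrow> x + y \<in> K"
    and Kmul: "\<And>x y. x \<in> K \<Longrightarrow> y \<in> K \<Longrightarrow> x * y \<in> K"
    and Kneg: "\<And>x. x \<in> K \<Longrightarrow> - x \<in> K"
    and Kinv: "\<And>x. x \<in> K \<Longrightarrow> inverse x \<in> K"
    and Kcnj: "\<And>x. x \<in> K \<Longrightarrow> cnj x \<in> K"
    using cf unfolding cfield_def by blast+
  have Kdiv: "\<And>x y. x \<in> K \<Longrightarrow> y \<in> K \<Longrightarrow> x / y \<in> K"
    by (simp add: divide_inverse Kmul Kinv)
  have Kdiff: "\<And>x y. x \<in> K \<Longrightarrow> y \<in> K \<Longrightarrow> x - y \<in> K"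
    by (metis Kadd Kneg diff_conv_add_uminus)
  have nb: "(complex_of_real (cmod \<beta>))^2 = \<beta> * cnj \<beta>"
    using complex_norm_square[of \<beta>] by simp
  have "Re (Qform \<alpha> \<beta> \<gamma> (1, 0)) > 0" using M_posdef unfolding pos_def_def by auto
  then have apos: "\<alpha> > 0" by (simp add: Qform_def herm_form_def)
  have "Re (Qform \<alpha> \<beta> \<gamma> (- \<beta>, complex_of_real \<alpha>)) > 0"
    using M_posdef apos unfolding pos_def_def by auto
  moreover have "Qform \<alpha> \<beta> \<gamma> (- \<beta>, complex_of_real \<alpha>) = complex_of_real (\<alpha> * (\<alpha> * \<gamma> - (cmod \<beta>)^2))"
    by (simp add: Qform_def herm_form_def nb algebra_simps)
  ultimately have "\<alpha> * (\<alpha> * \<gamma> - (cmod \<beta>)^2) > 0" by simp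
  then have "detM \<alpha> \<beta> \<gamma> > 0" using apos unfolding detM_def by (simp add: zero_less_mult_iff)
  then have Dpos: "\<Delta> > 0" using mu eps(1) by (simp add: zero_less_mult_iff)
  have dnz: "\<delta> \<noteq> 0" using Dpos delta(2) by auto
  have h1: "cnj \<delta> * \<delta> = complex_of_real \<Delta>"
    using complex_norm_square[of \<delta>] delta(2) by (simp add: mult.commute)
  have h2: "complex_of_real \<alpha> * complex_of_real \<gamma> - \<beta> * cnj \<beta> = complex_of_real \<Delta> * complex_of_real (real \<epsilon>)"
  proof -
    have "complex_of_real (\<alpha> * \<gamma> - (cmod \<beta>)^2) = complex_of_real (\<Delta> * real \<epsilon>)"
      using mu unfolding detM_def by simp
    then show ?thesis by (simp add: nb)
  qed
  define s where "s = complex_of_real (sqrt (real \<epsilon>))"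
  have ss: "s * s = complex_of_real (real \<epsilon>)" unfolding s_def of_real_mult[symmetric] by simp
  have cs: "cnj s = s" unfolding s_def by simp
  have snz: "s \<noteq> 0" unfolding s_def using eps(1) by simp
  define Wf where "Wf x y = - (\<beta> * cnj x + complex_of_real \<gamma> * cnj y) / \<delta>" for x y
  define Zf where "Zf x y = (complex_of_real \<alpha> * cnj x + cnj \<beta> * cnj y) / \<delta>" for x y
  define qf where "qf x y = cnj x * (complex_of_real \<alpha> * x + \<beta> * y) + cnj y * (cnj \<beta> * x + complex_of_real \<gamma> * y)" for x y
  have cdnz: "cnj \<delta> \<noteq> 0" using dnz by simp
  note C = core[OF h1 h2 dnz cdnz]
  have cW: "cnj (Wf x y) = - (cnj \<beta> * x + complex_of_real \<gamma> * y) / cnj \<delta>" for x y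
    unfolding Wf_def by simp
  have cZ: "cnj (Zf x y) = (complex_of_real \<alpha> * x + \<beta> * y) / cnj \<delta>" for x y
    unfolding Zf_def by simp
  have herm_eq: "herm_form \<alpha> \<beta> \<gamma> (x, y) (x, y) = qf x y" for x y
    unfolding herm_form_def qf_def by simp
  let ?t = "(complex_of_real (lam / \<Delta>) * \<beta>,
               complex_of_real (lam / \<Delta>) * \<delta> * complex_of_real (sqrt (real \<epsilon>)))"
  have Fm: "Fmap \<epsilon> ((x, y), (w, z)) = ((cnj z, cnj y * s), (- w, cnj x * s))" for x y w z
    unfolding Fmap_def s_def by simp
  have WK: "Wf x y \<in> K" and ZK: "Zf x y \<in> K" if "x \<in> K" "y \<in> K" for x y
    unfolding Wf_def Zf_def using that M_entries delta(1)
    by (auto intro!: Kdiv Kadd Kmul Kneg Kcnj Kdiff)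
  have fwd: "Fmap \<epsilon> ((x, y), (Wf x y, Zf x y)) \<in> Fnu K \<epsilon> (\<alpha> * lam / \<Delta>) ?t"
    if xy: "x \<in> K" "y \<in> K" and q: "qf x y = complex_of_real lam" for x y
  proof -
    have l1: "(cnj (Zf x y), cnj y * s) \<in> Lset K \<epsilon>"
      unfolding Lset_def s_def using Kcnj ZK xy by blast
    have l2: "(- Wf x y, cnj x * s) \<in> Lset K \<epsilon>"
      unfolding Lset_def s_def using Kcnj Kneg WK xy by blast
    have e1: "cnj (Zf x y) * (- Wf x y) - cnj y * s * cnj (cnj x * s) = complex_of_real (lam / \<Delta>) * \<beta>"
    proof -
      have "cnj (Zf x y) * (- Wf x y) - cnj y * s * cnj (cnj x * s)
          = - cnj (Zf x y) * Wf x y - cnj y * x * complex_of_real (real \<epsilon>)"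
        using ss cs by (simp add: algebra_simps)
      also have "\<dots> = qf x y / complex_of_real \<Delta> * \<beta>"
        using C(1)[where x=x and X="cnj x" and y=y and Y="cnj y"] unfolding cZ Wf_def qf_def by simp
      finally show ?thesis using q by simp
    qed
    have e2: "cnj (Zf x y) * (cnj x * s) + cnj y * s * cnj (- Wf x y) = complex_of_real (lam / \<Delta>) * \<delta> * complex_of_real (sqrt (real \<epsilon>))"
    proof -
      have "cnj (Zf x y) * (cnj x * s) + cnj y * s * cnj (- Wf x y)
          = (cnj (Zf x y) * cnj x - cnj y * cnj (Wf x y)) * s"
        by (simp add: algebra_simps)
      also have "\<dots> = qf x y / complex_of_real \<Delta> * \<delta> * s"
        using C(2)[where x=x and X="cnj x" and y=y and Y="cnj y"] unfolding cZ cW qf_def by simp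
      finally show ?thesis using q by (simp add: s_def)
    qed
    have e3: "qnorm2 (cnj (Zf x y), cnj y * s) = \<alpha> * lam / \<Delta>"
    proof -
      have "complex_of_real (qnorm2 (cnj (Zf x y), cnj y * s))
          = cnj (Zf x y) * Zf x y + complex_of_real (real \<epsilon>) * (cnj y * y)"
      proof -
        have a: "(complex_of_real (cmod (Zf x y)))^2 = Zf x y * cnj (Zf x y)"
          using complex_norm_square[of "Zf x y"] by simp
        have b: "(complex_of_real (cmod y))^2 = y * cnj y"
          using complex_norm_square[of y] by simp
        have c: "(complex_of_real (sqrt (real \<epsilon>)))^2 = complex_of_real (real \<epsilon>)"
          using ss unfolding s_def by (simp add: power2_eq_square)
        show ?thesis unfolding qnorm2_def s_def
          by (simp add: norm_mult power_mult_distrib a b c algebra_simps)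
      qed
      also have "\<dots> = complex_of_real \<alpha> * qf x y / complex_of_real \<Delta>"
        using C(3)[where x=x and X="cnj x" and y=y and Y="cnj y"] unfolding cZ Zf_def qf_def by simp
      also have "\<dots> = complex_of_real (\<alpha> * lam / \<Delta>)" using q by simp
      finally show ?thesis by (simp only: of_real_eq_iff)
    qed
    show ?thesis unfolding Fm Fnu_def qmult_def using l1 l2 e1 e2 e3 by simp
  qed
  have anz: "complex_of_real \<alpha> \<noteq> 0" using apos by simp
  have Dnz: "complex_of_real \<Delta> \<noteq> 0" using Dpos by simp
  have nrm: "complex_of_real (qnorm2 (cnj (Zf x y), cnj y * s))
          = cnj (Zf x y) * Zf x y + complex_of_real (real \<epsilon>) * (cnj y * y)" for x y
  proof -
    have a: "(complex_of_real (cmod (Zf x y)))^2 = Zf x y * cnj (Zf x y)"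
      using complex_norm_square[of "Zf x y"] by simp
    have b: "(complex_of_real (cmod y))^2 = y * cnj y"
      using complex_norm_square[of y] by simp
    have c: "(complex_of_real (sqrt (real \<epsilon>)))^2 = complex_of_real (real \<epsilon>)"
      using ss unfolding s_def by (simp add: power2_eq_square)
    show ?thesis unfolding qnorm2_def s_def
      by (simp add: norm_mult power_mult_distrib a b c algebra_simps)
  qed
  have C3: "cnj (Zf x y) * Zf x y + complex_of_real (real \<epsilon>) * (cnj y * y)
      = complex_of_real \<alpha> * qf x y / complex_of_real \<Delta>" for x y
    using C(3)[where x=x and X="cnj x" and y=y and Y="cnj y"] unfolding cZ Zf_def qf_def by simp
  have BQ1: "\<exists>x y. p = ((x, y), (Wf x y, Zf x y)) \<and> x \<in> K \<and> y \<in> K \<and> qf x y = complex_of_real lam"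
    if p: "p \<in> BQ K \<alpha> \<beta> \<gamma> \<epsilon> \<delta> lam" for p
  proof -
    obtain x y a2 where pe: "p = ((x, y), a2)" by (metis prod.collapse)
    have o: "orthobalanced K \<alpha> \<beta> \<gamma> \<epsilon> lam (x, y) a2"
      and a2: "a2 = (fst (perp (Mvec \<alpha> \<beta> \<gamma> (x, y))) / \<delta>, snd (perp (Mvec \<alpha> \<beta> \<gamma> (x, y))) / \<delta>)"
      using p unfolding pe BQ_def by auto
    have "a2 = (Wf x y, Zf x y)" unfolding a2 perp_def Mvec_def Wf_def Zf_def by simp
    moreover have "x \<in> K" "y \<in> K" "qf x y = complex_of_real lam"
      using o unfolding orthobalanced_def herm_eq by auto
    ultimately show ?thesis using pe by blast
  qed
  have BQ2: "((x, y), (Wf x y, Zf x y)) \<in> BQ K \<alpha> \<beta> \<gamma> \<epsilon> \<delta> lam"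
    if xy: "x \<in> K" "y \<in> K" and q: "qf x y = complex_of_real lam" for x y
  proof -
    have r4: "herm_form \<alpha> \<beta> \<gamma> (x, y) (Wf x y, Zf x y) = 0"
      using C(4)[where X="cnj x" and Y="cnj y"]
      unfolding herm_form_def Wf_def Zf_def by simp
    have r5: "herm_form \<alpha> \<beta> \<gamma> (Wf x y, Zf x y) (x, y) = 0"
      using C(5)[where x=x and y=y]
      unfolding herm_form_def by (simp only: fst_conv snd_conv cW cZ)
    have r6: "herm_form \<alpha> \<beta> \<gamma> (Wf x y, Zf x y) (Wf x y, Zf x y) = complex_of_real (lam * real \<epsilon>)"
      using C(6)[where x=x and X="cnj x" and y=y and Y="cnj y"] q
      unfolding herm_form_def fst_conv snd_conv cW cZ qf_def
      by (simp add: Wf_def Zf_def)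
    have a2: "(Wf x y, Zf x y) = (fst (perp (Mvec \<alpha> \<beta> \<gamma> (x, y))) / \<delta>, snd (perp (Mvec \<alpha> \<beta> \<gamma> (x, y))) / \<delta>)"
      unfolding perp_def Mvec_def Wf_def Zf_def by simp
    show ?thesis unfolding BQ_def orthobalanced_def
      using xy WK[OF xy] ZK[OF xy] q r4 r5 r6 a2 herm_eq by auto
  qed
  have surj: "\<exists>p \<in> BQ K \<alpha> \<beta> \<gamma> \<epsilon> \<delta> lam. Fmap \<epsilon> p = (u, v)"
    if uv: "(u, v) \<in> Fnu K \<epsilon> (\<alpha> * lam / \<Delta>) ?t" for u v
  proof -
    have uL: "u \<in> Lset K \<epsilon>" and tq: "?t = qmult u v" and nu: "qnorm2 u = \<alpha> * lam / \<Delta>"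
      using uv unfolding Fnu_def by auto
    obtain r s1 where u: "u = (r, s1 * s)" and r: "r \<in> K" and s1: "s1 \<in> K"
      using uL unfolding Lset_def s_def by auto
    define y where "y = cnj s1"
    define x where "x = cnj ((\<delta> * cnj r - cnj \<beta> * s1) / complex_of_real \<alpha>)"
    have xK: "x \<in> K" unfolding x_def using r s1 M_entries delta(1)
      by (auto intro!: Kdiv Kmul Kcnj Kdiff)
    have yK: "y \<in> K" unfolding y_def using s1 Kcnj by simp
    have Zr: "Zf x y = cnj r" unfolding Zf_def x_def y_def using anz dnz
      by (simp add: field_simps)
    have uF: "u = (cnj (Zf x y), cnj y * s)" unfolding u using Zr by (simp add: y_def)
    have "complex_of_real (\<alpha> * lam / \<Delta>) = complex_of_real \<alpha> * qf x y / complex_of_real \<Delta>"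
      using nrm[of x y] C3[of x y] nu uF by simp
    then have q: "qf x y = complex_of_real lam" using anz Dnz
      by (simp add: field_simps)
    let ?p = "((x, y), (Wf x y, Zf x y))"
    have pB: "?p \<in> BQ K \<alpha> \<beta> \<gamma> \<epsilon> \<delta> lam" using BQ2[OF xK yK q] .
    have "Fmap \<epsilon> ?p \<in> Fnu K \<epsilon> (\<alpha> * lam / \<Delta>) ?t" using fwd[OF xK yK q] .
    then have t2: "?t = qmult u (- Wf x y, cnj x * s)"
      unfolding Fm Fnu_def uF by simp
    have "v = (- Wf x y, cnj x * s)"
      using qcancel[of u v "(- Wf x y, cnj x * s)"] tq t2 nu apos lambda(2) Dpos by simp
    then have "Fmap \<epsilon> ?p = (u, v)" unfolding Fm uF by simp
    then show ?thesis using pB by blast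
  qed
  have inj: "inj_on (Fmap \<epsilon>) (BQ K \<alpha> \<beta> \<gamma> \<epsilon> \<delta> lam)"
  proof (rule inj_onI)
    fix p p' assume "Fmap \<epsilon> p = Fmap \<epsilon> p'"
    moreover obtain x y w z where "p = ((x, y), (w, z))" by (metis prod.collapse)
    moreover obtain x' y' w' z' where "p' = ((x', y'), (w', z'))" by (metis prod.collapse)
    ultimately show "p = p'" using snz by (simp add: Fm)
  qed
  have img1: "Fmap \<epsilon> ` BQ K \<alpha> \<beta> \<gamma> \<epsilon> \<delta> lam \<subseteq> Fnu K \<epsilon> (\<alpha> * lam / \<Delta>) ?t"
  proof
    fix q assume "q \<in> Fmap \<epsilon> ` BQ K \<alpha> \<beta> \<gamma> \<epsilon> \<delta> lam"
    then obtain p where p: "p \<in> BQ K \<alpha> \<beta> \<gamma> \<epsilon> \<delta> lam" and q: "q = Fmap \<epsilon> p" by blast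
    from BQ1[OF p] obtain x y where "p = ((x, y), (Wf x y, Zf x y))" "x \<in> K" "y \<in> K" "qf x y = complex_of_real lam"
      by blast
    then show "q \<in> Fnu K \<epsilon> (\<alpha> * lam / \<Delta>) ?t" using fwd q by simp
  qed
  have img2: "Fnu K \<epsilon> (\<alpha> * lam / \<Delta>) ?t \<subseteq> Fmap \<epsilon> ` BQ K \<alpha> \<beta> \<gamma> \<epsilon> \<delta> lam"
  proof
    fix q assume "q \<in> Fnu K \<epsilon> (\<alpha> * lam / \<Delta>) ?t"
    moreover obtain u v where "q = (u, v)" by (metis prod.collapse)
    ultimately show "q \<in> Fmap \<epsilon> ` BQ K \<alpha> \<beta> \<gamma> \<epsilon> \<delta> lam" using surj by (metis image_iff)
  qed
  show ?thesis unfolding bij_betw_def using inj img1 img2 by blast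
qed

end
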